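(* Let $r=[r_0,\ldots,r_m]$ and $c=[c_0,\ldots,c_n]$ be selections of rows and columns of the Pascal upper triangular matrix $T$, and let $\{\hat r,\hat c\}$ be an ordered sub-pair of $\{r,c\}$ of length $p+1\ge 1$, with $\hat r=[\hat r_0,\ldots,\hat r_p]$ and $\hat c=[\hat c_0,\ldots,\hat c_p]$. Then: (i) $T_{\hat r,\hat c}$ is a $(p+1)\times(p+1)$ invertible submatrix of $T_{r,c}$; (ii) $T_{\hat r,c}$ is a $(p+1)\times(n+1)$ matrix of full row rank $p+1$; (iii) $T_{r,\hat c}$ is an $(m+1)\times(p+1)$ matrix of full column rank $p+1$. If moreover $\{\hat r,\hat c\}$ is maximal, then: (iv) $\operatorname{rank}(T_{r,c})=p+1$; (v) the columns of $T_{r,\hat c}$ span the column space of $T_{r,c}$; (vi) the rows of $T_{\hat r,c}$ span the row space of $T_{r,c}$.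
   Context: The Pascal upper triangular matrix is the infinite matrix $T=(T_{i,j})_{i,j\ge 0}$ with $T_{i,j}=\binom{j}{i}$, where $\binom{j}{i}:=0$ if $i>j$ (rows and columns indexed from $0$). A selection of rows (resp. columns) is a strictly increasing finite sequence of nonnegative integers. For selections $r=[r_0,\ldots,r_m]$ and $c=[c_0,\ldots,c_n]$, $T_{r,c}$ denotes the $(m+1)\times(n+1)$ matrix whose $(i,j)$ entry is $\binom{c_j}{r_i}$. A pair $\{\hat r,\hat c\}$ is an ordered sub-pair of $\{r,c\}$ of length $p+1$ if $\hat r=[\hat r_0,\ldots,\hat r_p]$ is a subsequence of $r$, $\hat c=[\hat c_0,\ldots,\hat c_p]$ is a subsequence of $c$, and $\hat r_i\le \hat c_i$ for all $i=0,\ldots,p$ (the empty pair has length $0$). It is maximal if no ordered sub-pair of $\{r,c\}$ has length greater than $p+1$. *)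

theory Defs
  imports "Jordan_Normal_Form.DL_Rank" "Jordan_Normal_Form.DL_Submatrix" "HOL-Library.Sublist"
begin

definition selection :: "nat list \<Rightarrow> bool" where
  "selection s \<longleftrightarrow> s \<noteq> [] \<and> sorted_wrt (<) s"

definition pascal_sub :: "nat list \<Rightarrow> nat list \<Rightarrow> real mat" where
  "pascal_sub r c = mat (length r) (length c) (\<lambda>(i,j). real ((c ! j) choose (r ! i)))"

definition ordered_subpair :: "nat list \<Rightarrow> nat list \<Rightarrow> nat list \<Rightarrow> nat list \<Rightarrow> bool" where
  "ordered_subpair r c rh ch \<longleftrightarrow> subseq rh r \<and> subseq ch c \<and> length rh = length ch
     \<and> (\<forall>i < length rh. rh ! i \<le> ch ! i)"

definition maximal_subpair :: "nat list \<Rightarrow> nat list \<Rightarrow> nat list \<Rightarrow> nat list \<Rightarrow> bool" where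
  "maximal_subpair r c rh ch \<longleftrightarrow> ordered_subpair r c rh ch
     \<and> (\<forall>rh' ch'. ordered_subpair r c rh' ch' \<longrightarrow> length rh' \<le> length rh)"

end

theory Submission
  imports Defs "Jordan_Normal_Form.DL_Rank_Submatrix"
begin


lemma pascal_sub_carrier: "pascal_sub s d \<in> carrier_mat (length s) (length d)"
  unfolding pascal_sub_def by auto

lemma pascal_sub_dims[simp]: "dim_row (pascal_sub s d) = length s" "dim_col (pascal_sub s d) = length d"
  unfolding pascal_sub_def by auto

lemma pascal_sub_index[simp]: "i < length s \<Longrightarrow> j < length d \<Longrightarrow> pascal_sub s d $$ (i,j) = real (d!j choose s!i)"
  unfolding pascal_sub_def by auto

lemma det_zero_row:
  fixes B :: "real mat"
  assumes B: "B \<in> carrier_mat n n" and i: "i < n" and z: "\<And>j. j < n \<Longrightarrow> B $$ (i,j) = 0"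
  shows "det B = 0"
  using laplace_expansion_row[OF B i] z by simp

lemma pascal_identical_rows:
  assumes "i < j" "j < length t" "t!i = t!j" "length t = length d"
  shows "det (pascal_sub t d) = 0"
proof (rule det_identical_rows[OF _ _ _ _ ])
  show "pascal_sub t d \<in> carrier_mat (length t) (length t)" using assms pascal_sub_carrier by metis
  show "i \<noteq> j" "i < length t" "j < length t" using assms by auto
  show "row (pascal_sub t d) i = row (pascal_sub t d) j"
    by (rule eq_vecI, insert assms, auto)
qed

lemma sum_list_minus1: "(\<forall>x\<in>set d. x > 0) \<Longrightarrow> sum_list (map (\<lambda>x. x - 1) d) + length d = sum_list (d::nat list)"
  by (induction d) auto

lemma pascal_det_main:
  "sorted_wrt (<) s \<Longrightarrow> sorted_wrt (<) d \<Longrightarrow> length s = length d \<Longrightarrow>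
    0 \<le> det (pascal_sub s d) \<and> (0 < det (pascal_sub s d) \<longleftrightarrow> (\<forall>i<length s. s!i \<le> d!i))"
proof (induction "length d + sum_list d" arbitrary: s d rule: less_induct)
  case less
  show ?case
  proof (cases d)
    case Nil
    then have "s = []" using less by auto
    then show ?thesis using Nil pascal_sub_carrier[of "[]" "[]"] by simp
  next
    case (Cons d0 d')
    then obtain s0 s' where s: "s = s0 # s'" using less by (cases s) auto
    have len': "length s' = length d'" using less s Cons by auto
    have ss': "sorted_wrt (<) s'" and sd': "sorted_wrt (<) d'" using less s Cons by auto
    show ?thesis
    proof (cases "d0 = 0")
      case True
      note d0 = True
      show ?thesis
      proof (cases "s0 = 0")
        case False
        have "det (pascal_sub s d) = 0"
        proof -
          have "det (pascal_sub s d) = (\<Sum>i<length s. pascal_sub s d $$ (i,0) * cofactor (pascal_sub s d) i 0)"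
            by (rule laplace_expansion_column, insert pascal_sub_carrier[of s d] less s, auto)
          also have "\<dots> = 0"
          proof (rule sum.neutral, intro ballI)
            fix i assume i: "i \<in> {..<length s}"
            have "s!i \<ge> s0" using less(2) i s
              by (cases i) (auto intro: less_imp_le)
            then show "pascal_sub s d $$ (i,0) * cofactor (pascal_sub s d) i 0 = 0"
              using i False d0 Cons less(4) by auto
          qed
          finally show ?thesis .
        qed
        moreover have "\<not> (\<forall>i<length s. s!i \<le> d!i)" using False d0 s Cons by (auto elim!: allE[of _ 0])
        ultimately show ?thesis by auto
      next
        case True
        note s00 = True
        have m: "length d' + sum_list d' < length d + sum_list d" using Cons d0 by auto
        note IH = less(1)[OF m ss' sd' len']
        have "det (pascal_sub s d) = det (pascal_sub s' d')"
        proof -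
          have "det (pascal_sub s d) = (\<Sum>i<length s. pascal_sub s d $$ (i,0) * cofactor (pascal_sub s d) i 0)"
            by (rule laplace_expansion_column, insert pascal_sub_carrier[of s d] less s, auto)
          also have "\<dots> = (\<Sum>i<length s. if i = 0 then det (pascal_sub s' d') else 0)"
          proof (rule sum.cong[OF refl])
            fix i assume i: "i \<in> {..<length s}"
            show "pascal_sub s d $$ (i,0) * cofactor (pascal_sub s d) i 0 = (if i = 0 then det (pascal_sub s' d') else 0)"
            proof (cases i)
              case 0
              have "mat_delete (pascal_sub s d) 0 0 = pascal_sub s' d'"
                by (rule eq_matI, unfold mat_delete_def, insert s Cons len', auto)
              then show ?thesis using 0 s Cons s00 d0 by (auto simp: cofactor_def)
            next
              case (Suc k)
              have "s!i > 0" using less(2) i s Suc s00 by auto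
              then show ?thesis using i Suc Cons d0 less(4) by auto
            qed
          qed
          also have "\<dots> = det (pascal_sub s' d')" using s by simp
          finally show ?thesis .
        qed
        moreover have "(\<forall>i<length s. s!i \<le> d!i) \<longleftrightarrow> (\<forall>i<length s'. s'!i \<le> d'!i)"
          using s Cons s00 d0 by (auto simp: All_less_Suc2)
        ultimately show ?thesis using IH by simp
      qed
    next
      case False
      define n where "n = length s"
      define e where "e = map (\<lambda>x. x - 1) d"
      have dpos: "\<forall>x\<in>set d. x > 0"
      proof
        fix x assume "x \<in> set d"
        then have "x = d0 \<or> x \<in> set d'" using Cons by auto
        then show "x > 0" using False less(3) Cons by auto
      qed
      have dpos': "\<And>j. j < n \<Longrightarrow> d!j > 0" using dpos less(4) n_def by auto
      have le: "length e = n" using less(4) n_def e_def by auto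
      have e_idx: "\<And>j. j < n \<Longrightarrow> e!j = d!j - 1" using e_def less(4) n_def by auto
      have m: "length e + sum_list e < length d + sum_list d"
        using sum_list_minus1[OF dpos] Cons e_def by auto
      have se: "sorted_wrt (<) e"
      proof -
        have "d!i - 1 < d!j - 1" if ij: "i < j" "j < length d" for i j
        proof -
          have "d!i < d!j" using less(3) ij by (auto simp: sorted_wrt_iff_nth_less)
          moreover have "d!i > 0" using dpos ij by auto
          ultimately show ?thesis by linarith
        qed
        then show ?thesis unfolding e_def by (auto simp: sorted_wrt_iff_nth_less)
      qed
      have IH: "\<And>t. sorted_wrt (<) t \<Longrightarrow> length t = n \<Longrightarrow>
          0 \<le> det (pascal_sub t e) \<and> (0 < det (pascal_sub t e) \<longleftrightarrow> (\<forall>i<length t. t!i \<le> e!i))"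
        using less(1)[OF m _ se] le by auto
      define a where "a i f = (if f = (0::nat) then vec n (\<lambda>j. real (e!j choose s!i))
          else vec n (\<lambda>j. if s!i \<ge> 1 then real (e!j choose (s!i - 1)) else 0))" for i f
      define F where "F = {f. (\<forall>i\<in>{0..<n}. f i \<in> {0,1::nat}) \<and> (\<forall>i. i \<notin> {0..<n} \<longrightarrow> f i = i)}"
      define B where "B f = mat\<^sub>r n n (\<lambda>i. a i (f i))" for f
      have Bc: "B f \<in> carrier_mat n n" for f unfolding B_def by auto
      have finF: "finite F" unfolding F_def by (rule finite_bounded_functions, auto)
      have acar: "a \<in> {0..<n} \<rightarrow> {0,1} \<rightarrow> carrier_vec n" unfolding a_def by auto
      have Aeq: "pascal_sub s d = mat\<^sub>r n n (\<lambda>i. finsum_vec TYPE(real) n (a i) {0,1})"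
      proof (rule eq_matI)
        fix i j assume i: "i < dim_row (mat\<^sub>r n n (\<lambda>i. finsum_vec TYPE(real) n (a i) {0,1}))"
          and j: "j < dim_col (mat\<^sub>r n n (\<lambda>i. finsum_vec TYPE(real) n (a i) {0,1}))"
        then have i: "i < n" and j: "j < n" by auto
        have "mat\<^sub>r n n (\<lambda>i. finsum_vec TYPE(real) n (a i) {0,1}) $$ (i,j) = (\<Sum>f\<in>{0,1}. a i f $ j)"
          using i j by (auto simp: index_finsum_vec[where n=n] a_def)
        also have "\<dots> = real (e!j choose s!i) + (if s!i \<ge> 1 then real (e!j choose (s!i - 1)) else 0)"
          using j by (simp add: a_def)
        also have "\<dots> = real (d!j choose s!i)"
        proof -
          have "d!j > 0" using dpos' j .
          then show ?thesis using e_idx[OF j]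
            by (cases "s!i") (auto simp: choose_reduce_nat)
        qed
        finally show "pascal_sub s d $$ (i, j) = mat\<^sub>r n n (\<lambda>i. finsum_vec TYPE(real) n (a i) {0,1}) $$ (i, j)"
          using i j less(4) n_def by simp
      qed (insert less(4) n_def, auto)
      have detsum: "det (pascal_sub s d) = (\<Sum>f\<in>F. det (B f))"
        unfolding Aeq B_def F_def by (rule det_linear_rows_sum[OF _ acar], simp)
      define t where "t f = map (\<lambda>i. s!i - f i) [0..<n]" for f
      have lt: "length (t f) = n" for f unfolding t_def by auto
      have tidx: "i < n \<Longrightarrow> t f ! i = s!i - f i" for f i unfolding t_def by auto
      have sinc: "i < j \<Longrightarrow> j < n \<Longrightarrow> s!i < s!j" for i j using less(2) n_def
        by (auto simp: sorted_wrt_iff_nth_less)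
      have termc: "det (B f) = 0 \<or> (sorted_wrt (<) (t f) \<and> det (B f) = det (pascal_sub (t f) e))"
        if f: "f \<in> F" for f
      proof (cases "\<exists>i<n. f i = 1 \<and> s!i = 0")
        case True
        then obtain i where i: "i < n" "f i = 1" "s!i = 0" by auto
        have "det (B f) = 0"
          by (rule det_zero_row[OF Bc i(1)], insert i, auto simp: B_def a_def)
        then show ?thesis by simp
      next
        case False
        have fi: "i < n \<Longrightarrow> f i = 0 \<or> f i = 1" for i using f unfolding F_def by auto
        have Beq: "B f = pascal_sub (t f) e"
        proof (rule eq_matI)
          fix i j assume "i < dim_row (pascal_sub (t f) e)" "j < dim_col (pascal_sub (t f) e)"
          then have i: "i < n" and j: "j < n" using lt le by auto
          show "B f $$ (i,j) = pascal_sub (t f) e $$ (i,j)"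
            using i j fi[OF i] False lt le tidx[OF i] unfolding B_def a_def by auto
        qed (insert lt le, auto simp: B_def)
        have mono: "i < j \<Longrightarrow> j < n \<Longrightarrow> t f ! i \<le> t f ! j" for i j
          using sinc[of i j] tidx[of i f] tidx[of j f] fi[of i] fi[of j] by auto
        show ?thesis
        proof (cases "\<exists>i j. i < j \<and> j < n \<and> t f ! i = t f ! j")
          case True
          then obtain i j where ij: "i < j" "j < n" "t f ! i = t f ! j" by auto
          have "det (pascal_sub (t f) e) = 0"
            using pascal_identical_rows[of i j "t f" e] ij lt le by auto
          then show ?thesis using Beq by simp
        next
          case False
          have "sorted_wrt (<) (t f)" unfolding sorted_wrt_iff_nth_less lt
            using False mono by (metis le_neq_implies_less)
          then show ?thesis using Beq by simp
        qed
      qed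
      have nonneg: "0 \<le> det (B f)" if f: "f \<in> F" for f
        using termc[OF f] IH[OF _ lt] by auto
      have "0 \<le> det (pascal_sub s d)" unfolding detsum by (rule sum_nonneg, rule nonneg)
      moreover have "0 < det (pascal_sub s d) \<longleftrightarrow> (\<forall>i<length s. s!i \<le> d!i)"
      proof
        assume pos: "0 < det (pascal_sub s d)"
        show "\<forall>i<length s. s!i \<le> d!i"
        proof (rule ccontr)
          assume "\<not> (\<forall>i<length s. s!i \<le> d!i)"
          then obtain k where k: "k < n" "s!k > d!k" using n_def by auto
          have "det (B f) \<le> 0" if f: "f \<in> F" for f
          proof -
            have fk: "f k = 0 \<or> f k = 1" using f k unfolding F_def by auto
            have "t f ! k > e ! k" using tidx[OF k(1)] e_idx[OF k(1)] k fk dpos'[OF k(1)] by auto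
            then have "\<not> (\<forall>i<length (t f). t f!i \<le> e!i)" using k lt by (metis leD)
            note nk = this
            show ?thesis
            proof (cases "det (B f) = 0")
              case False
              then have st: "sorted_wrt (<) (t f)" and eq: "det (B f) = det (pascal_sub (t f) e)"
                using termc[OF f] by auto
              have "\<not> 0 < det (pascal_sub (t f) e)" using IH[OF st lt] nk by blast
              then show ?thesis using eq by simp
            qed simp
          qed
          then have "det (pascal_sub s d) \<le> 0" unfolding detsum by (rule sum_nonpos)
          then show False using pos by simp
        qed
      next
        assume ok: "\<forall>i<length s. s!i \<le> d!i"
        define g where "g i = (if i < n then (if s!i = d!i then 1 else 0) else i)" for i
        have gF: "g \<in> F" unfolding F_def g_def by auto
        have nz: "\<not> (\<exists>i<n. g i = 1 \<and> s!i = 0)" using dpos' unfolding g_def by auto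
        have tg: "i < n \<Longrightarrow> t g ! i \<le> e!i" for i using tidx[of i g] e_idx[of i] ok n_def
          unfolding g_def by auto
        have dinc: "i < j \<Longrightarrow> j < n \<Longrightarrow> d!i < d!j" for i j using less(3) less(4) n_def
          by (auto simp: sorted_wrt_iff_nth_less)
        have Beq: "B g = pascal_sub (t g) e"
        proof (rule eq_matI)
          fix i j assume "i < dim_row (pascal_sub (t g) e)" "j < dim_col (pascal_sub (t g) e)"
          then have i: "i < n" and j: "j < n" using lt le by auto
          show "B g $$ (i,j) = pascal_sub (t g) e $$ (i,j)"
            using i j nz lt le tidx[OF i] dpos'[OF i] unfolding B_def a_def g_def by auto
        qed (insert lt le, auto simp: B_def)
        have "sorted_wrt (<) (t g)" unfolding sorted_wrt_iff_nth_less lt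
        proof (intro allI impI)
          fix i j assume ij: "i < j" "j < n"
          have "s!i < s!j" using sinc ij .
          moreover have "d!i < d!j" using dinc ij .
          moreover have "s!i \<le> d!i" "s!j \<le> d!j" using ok ij n_def by auto
          moreover have "d!i > 0" using dpos' ij by auto
          ultimately show "t g ! i < t g ! j" using tidx[of i g] tidx[of j g] ij unfolding g_def by auto
        qed
        then have "0 < det (B g)" using IH[OF _ lt] tg lt Beq by auto
        then show "0 < det (pascal_sub s d)" unfolding detsum
          by (rule sum_pos2[OF finF gF _ nonneg])
      qed
      ultimately show ?thesis by simp
    qed
  qed
qed



lemma subseq_sorted_wrt: "subseq xs ys \<Longrightarrow> sorted_wrt P ys \<Longrightarrow> sorted_wrt P xs"
proof (induction rule: list_emb.induct)
  case (list_emb_Cons xs ys y)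
  then show ?case by auto
next
  case (list_emb_Cons2 x y xs ys)
  then show ?case using list_emb_set[OF list_emb_Cons2(2)] by auto
qed auto

lemma det_nz_invertible:
  fixes A :: "real mat"
  assumes A: "A \<in> carrier_mat n n" and d: "det A \<noteq> 0"
  shows "invertible_mat A"
proof -
  from det_non_zero_imp_unit[OF A d, of "()"]
  obtain B where B: "B \<in> carrier_mat n n" "B * A = 1\<^sub>m n" "A * B = 1\<^sub>m n"
    unfolding Units_def ring_mat_def by auto
  then show ?thesis unfolding invertible_mat_def inverts_mat_def square_mat.simps using A B by auto
qed

lemma subseq_pick:
  fixes r rh :: "nat list"
  assumes r: "sorted_wrt (<) r" and sub: "subseq rh r"
  obtains I where "I \<subseteq> {..<length r}" "card {i. i < length r \<and> i \<in> I} = length rh"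
    "\<And>l. l < length rh \<Longrightarrow> pick I l < length r \<and> r ! pick I l = rh ! l"
proof -
  let ?k = "length rh"
  have "\<forall>l<?k. \<exists>i. i < length r \<and> r!i = rh!l"
    using list_emb_set[OF sub] by (metis in_set_conv_nth)
  then obtain idx where idx: "\<And>l. l < ?k \<Longrightarrow> idx l < length r \<and> r!(idx l) = rh!l" by metis
  have rhs: "sorted_wrt (<) rh" using subseq_sorted_wrt[OF sub r] .
  have mono: "idx l < idx l'" if "l < l'" "l' < ?k" for l l'
  proof (rule ccontr)
    assume "\<not> idx l < idx l'"
    then have "idx l' \<le> idx l" by simp
    then have "r!(idx l') \<le> r!(idx l)"
    proof (cases "idx l' = idx l")
      case False
      then have "idx l' < idx l" using \<open>idx l' \<le> idx l\<close> by simp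
      moreover have "idx l < length r" using idx[of l] that by auto
      ultimately show ?thesis using r unfolding sorted_wrt_iff_nth_less by (meson less_imp_le)
    qed simp
    moreover have "rh!l < rh!l'" using rhs that by (auto simp: sorted_wrt_iff_nth_less)
    ultimately show False using idx[of l] idx[of l'] that by auto
  qed
  define I where "I = idx ` {..<?k}"
  have inj: "inj_on idx {..<?k}" unfolding inj_on_def
    by (metis lessThan_iff mono nat_neq_iff)
  have sub1: "I \<subseteq> {..<length r}" unfolding I_def using idx by auto
  have card: "card {i. i < length r \<and> i \<in> I} = ?k"
  proof -
    have "{i. i < length r \<and> i \<in> I} = I" using sub1 by auto
    then show ?thesis using card_image[OF inj] unfolding I_def by simp
  qed
  have pick: "pick I l = idx l" if l: "l < ?k" for l
  proof -
    have "{a\<in>I. a < idx l} = idx ` {..<l}"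
    proof
      show "{a \<in> I. a < idx l} \<subseteq> idx ` {..<l}"
      proof
        fix a assume "a \<in> {a \<in> I. a < idx l}"
        then obtain l' where l': "l' < ?k" "a = idx l'" "idx l' < idx l" unfolding I_def by auto
        have "l' < l" using mono[of l l'] l l' by (metis nat_neq_iff order.asym)
        then show "a \<in> idx ` {..<l}" using l' by auto
      qed
      show "idx ` {..<l} \<subseteq> {a \<in> I. a < idx l}" using mono l unfolding I_def by auto
    qed
    moreover have "card (idx ` {..<l}) = l"
      by (rule trans[OF card_image], rule inj_on_subset[OF inj], insert l, auto)
    ultimately have "card {a\<in>I. a < idx l} = l" by simp
    moreover have "idx l \<in> I" using l unfolding I_def by auto
    ultimately show ?thesis using pick_card_in_set[of "idx l" I] by simp
  qed
  show ?thesis using that[OF sub1 card] pick idx by auto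
qed

lemma pascal_submatrix:
  assumes r: "sorted_wrt (<) r" and c: "sorted_wrt (<) c"
    and sr: "subseq rh r" and sc: "subseq ch c"
  shows "\<exists>I J. I \<subseteq> {..<length r} \<and> J \<subseteq> {..<length c} \<and> submatrix (pascal_sub r c) I J = pascal_sub rh ch"
proof -
  obtain I where I: "I \<subseteq> {..<length r}" "card {i. i < length r \<and> i \<in> I} = length rh"
    "\<And>l. l < length rh \<Longrightarrow> pick I l < length r \<and> r ! pick I l = rh ! l"
    using subseq_pick[OF r sr] by metis
  obtain J where J: "J \<subseteq> {..<length c}" "card {i. i < length c \<and> i \<in> J} = length ch"
    "\<And>l. l < length ch \<Longrightarrow> pick J l < length c \<and> c ! pick J l = ch ! l"
    using subseq_pick[OF c sc] by metis
  have "submatrix (pascal_sub r c) I J = pascal_sub rh ch"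
  proof (rule eq_matI)
    fix i j assume i: "i < dim_row (pascal_sub rh ch)" and j: "j < dim_col (pascal_sub rh ch)"
    then have i': "i < card {i. i < dim_row (pascal_sub r c) \<and> i \<in> I}"
      and j': "j < card {j. j < dim_col (pascal_sub r c) \<and> j \<in> J}" using I J by auto
    show "submatrix (pascal_sub r c) I J $$ (i, j) = pascal_sub rh ch $$ (i, j)"
      unfolding submatrix_index[OF i' j'] using I(3)[of i] J(3)[of j] i j by auto
  qed (insert I J, auto simp: dim_submatrix)
  then show ?thesis using I J by blast
qed

lemma det_pascal_perm_rows:
  assumes p: "p permutes {..<length xs}" and l: "length xs = length ys"
  shows "det (pascal_sub (permute_list p xs) ys) = signof p * det (pascal_sub xs ys)"
proof -
  let ?n = "length xs"
  have p': "p permutes {0..<?n}" using p by (simp add: atLeast0LessThan)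
  have "pascal_sub (permute_list p xs) ys = mat ?n ?n (\<lambda>(i,j). pascal_sub xs ys $$ (p i, j))"
    by (rule eq_matI, insert l permutes_in_image[OF p], auto simp: permute_list_nth[OF p])
  then show ?thesis using det_permute_rows[OF _ p', of "pascal_sub xs ys"] pascal_sub_carrier[of xs ys] l
    by simp
qed

lemma det_pascal_perm_cols:
  assumes p: "p permutes {..<length ys}" and l: "length xs = length ys"
  shows "det (pascal_sub xs (permute_list p ys)) = signof p * det (pascal_sub xs ys)"
proof -
  let ?n = "length ys"
  have p': "p permutes {0..<?n}" using p by (simp add: atLeast0LessThan)
  have T: "transpose_mat (pascal_sub xs ys) \<in> carrier_mat ?n ?n" using l pascal_sub_carrier[of xs ys] by auto
  have "transpose_mat (pascal_sub xs (permute_list p ys)) = mat ?n ?n (\<lambda>(i,j). transpose_mat (pascal_sub xs ys) $$ (p i, j))"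
    by (rule eq_matI, insert l permutes_in_image[OF p], auto simp: permute_list_nth[OF p])
  then have "det (transpose_mat (pascal_sub xs (permute_list p ys))) = signof p * det (transpose_mat (pascal_sub xs ys))"
    using det_permute_rows[OF T p'] by simp
  moreover have "det (transpose_mat (pascal_sub xs (permute_list p ys))) = det (pascal_sub xs (permute_list p ys))"
    by (rule det_transpose, insert l pascal_sub_carrier[of xs "permute_list p ys"], auto)
  moreover have "det (transpose_mat (pascal_sub xs ys)) = det (pascal_sub xs ys)"
    by (rule det_transpose, insert l pascal_sub_carrier[of xs ys], auto)
  ultimately show ?thesis by simp
qed

lemma det_pascal_sort:
  assumes l: "length xs = length ys" and nz: "det (pascal_sub xs ys) \<noteq> 0"
  shows "det (pascal_sub (sort xs) (sort ys)) \<noteq> 0"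
proof -
  obtain p where p: "p permutes {..<length xs}" "permute_list p xs = sort xs"
    using mset_eq_permutation[of "sort xs" xs] by auto
  obtain q where q: "q permutes {..<length ys}" "permute_list q ys = sort ys"
    using mset_eq_permutation[of "sort ys" ys] by auto
  have s1: "det (pascal_sub (sort xs) ys) = signof p * det (pascal_sub xs ys)"
    using det_pascal_perm_rows[OF p(1) l] p(2) by simp
  have s2: "det (pascal_sub (sort xs) (sort ys)) = signof q * det (pascal_sub (sort xs) ys)"
    using det_pascal_perm_cols[OF q(1), of "sort xs"] q(2) l by simp
  have "(signof p :: real) \<noteq> 0" "(signof q :: real) \<noteq> 0" by (auto simp: sign_def)
  then show ?thesis using s1 s2 nz by simp
qed

lemma subseq_set: "subseq xs ys \<Longrightarrow> set xs \<subseteq> set ys"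
  by (induction rule: list_emb.induct) auto

lemma pascal_factor:
  fixes r c rh ch :: "nat list" and Ainv :: "real mat"
  assumes r: "sorted_wrt (<) r" and c: "sorted_wrt (<) c"
    and os: "ordered_subpair r c rh ch" and mx: "maximal_subpair r c rh ch"
    and Ai: "Ainv \<in> carrier_mat k k" and k: "k = length rh"
    and inv1: "pascal_sub rh ch * Ainv = 1\<^sub>m k" and inv2: "Ainv * pascal_sub rh ch = 1\<^sub>m k"
  shows "pascal_sub r c = pascal_sub r ch * (Ainv * pascal_sub rh c)"
proof (rule eq_matI)
  have kc: "length ch = k" using os k unfolding ordered_subpair_def by auto
  define A where "A = pascal_sub rh ch"
  have A: "A \<in> carrier_mat k k" unfolding A_def using pascal_sub_carrier[of rh ch] k kc by simp
  have srh: "sorted_wrt (<) rh" and sch: "sorted_wrt (<) ch"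
    using subseq_sorted_wrt[of rh r] subseq_sorted_wrt[of ch c] os r c unfolding ordered_subpair_def by auto
  have setrh: "set rh \<subseteq> set r" and setch: "set ch \<subseteq> set c"
    using os subseq_set[of rh r] subseq_set[of ch c] unfolding ordered_subpair_def by auto
  fix i j assume "i < dim_row (pascal_sub r ch * (Ainv * pascal_sub rh c))"
    and "j < dim_col (pascal_sub r ch * (Ainv * pascal_sub rh c))"
  then have i: "i < length r" and j: "j < length c" by auto
  define b where "b = col (pascal_sub rh c) j"
  have b: "b \<in> carrier_vec k" unfolding b_def using k col_dim[of "pascal_sub rh c" j] by simp
  have bl: "l < k \<Longrightarrow> b $ l = real (c!j choose rh!l)" for l unfolding b_def using j k by auto
  define w where "w = Ainv *\<^sub>v b"
  have w: "w \<in> carrier_vec k" unfolding w_def using Ai b by auto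
  have Aw: "A *\<^sub>v w = b"
    unfolding w_def using assoc_mult_mat_vec[OF A Ai b, symmetric] inv1 b unfolding A_def by simp
  have Aw': "(\<Sum>l'\<in>{0..<k}. real (ch!l' choose rh!l) * w$l') = real (c!j choose rh!l)" if l: "l < k" for l
  proof -
    have "(A *\<^sub>v w) $ l = b $ l" using Aw by simp
    then show ?thesis using l A w bl[OF l] k kc unfolding A_def
      by (auto simp: scalar_prod_def)
  qed
  have uniq: "z l = 0" if hz: "\<And>l. l < k \<Longrightarrow> (\<Sum>l'\<in>{0..<k}. real (ch!l' choose rh!l) * z l') = 0"
    and l: "l < k" for z l
  proof -
    define zv where "zv = vec k z"
    have zv: "zv \<in> carrier_vec k" unfolding zv_def by auto
    have "A *\<^sub>v zv = 0\<^sub>v k"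
    proof (rule eq_vecI)
      fix l assume "l < dim_vec (0\<^sub>v k :: real vec)"
      then have l: "l < k" by simp
      show "(A *\<^sub>v zv) $ l = 0\<^sub>v k $ l"
        using hz[OF l] l A k kc unfolding A_def zv_def by (auto simp: scalar_prod_def)
    qed (insert A, auto)
    moreover have "Ainv *\<^sub>v 0\<^sub>v k = 0\<^sub>v k"
      by (rule eq_vecI, insert Ai, auto simp: scalar_prod_def)
    ultimately have "zv = 0\<^sub>v k"
      using assoc_mult_mat_vec[OF Ai A zv] inv2 zv unfolding A_def by auto
    then show ?thesis using l unfolding zv_def by (metis index_vec index_zero_vec(1))
  qed
  have lhs: "pascal_sub r c $$ (i,j) = real (c!j choose r!i)" using i j by simp
  have rhs: "(pascal_sub r ch * (Ainv * pascal_sub rh c)) $$ (i,j) =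
      (\<Sum>l\<in>{0..<k}. real (ch!l choose r!i) * w$l)"
  proof -
    have "col (Ainv * pascal_sub rh c) j = w"
      unfolding w_def b_def by (rule col_mult2, insert Ai j k, auto)
    then show ?thesis using i j k kc w by (auto simp: scalar_prod_def)
  qed
  show "pascal_sub r c $$ (i,j) = (pascal_sub r ch * (Ainv * pascal_sub rh c)) $$ (i,j)"
    unfolding lhs rhs
  proof (cases "r!i \<in> set rh")
    case True
    then obtain l0 where l0: "l0 < k" "rh!l0 = r!i" using k by (metis in_set_conv_nth)
    show "real (c!j choose r!i) = (\<Sum>l\<in>{0..<k}. real (ch!l choose r!i) * w$l)"
      using Aw'[OF l0(1)] l0 by simp
  next
    case nr: False
    show "real (c!j choose r!i) = (\<Sum>l\<in>{0..<k}. real (ch!l choose r!i) * w$l)"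
    proof (cases "c!j \<in> set ch")
      case True
      then obtain l0 where l0: "l0 < k" "ch!l0 = c!j" using kc by (metis in_set_conv_nth)
      have wd: "w$l - (if l = l0 then 1 else 0) = 0" if l: "l < k" for l
      proof (rule uniq[OF _ l])
        fix l assume l: "l < k"
        have "(\<Sum>l'\<in>{0..<k}. real (ch!l' choose rh!l) * (w$l' - (if l' = l0 then 1 else 0)))
          = (\<Sum>l'\<in>{0..<k}. real (ch!l' choose rh!l) * w$l') - (\<Sum>l'\<in>{0..<k}. if l' = l0 then real (ch!l' choose rh!l) else 0)"
        proof -
          have "(\<Sum>l'\<in>{0..<k}. real (ch!l' choose rh!l) * (w$l' - (if l' = l0 then 1 else 0)))
            = (\<Sum>l'\<in>{0..<k}. real (ch!l' choose rh!l) * w$l' - (if l' = l0 then real (ch!l' choose rh!l) else 0))"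
            by (rule sum.cong[OF refl], simp add: right_diff_distrib)
          then show ?thesis by (simp only: sum_subtractf)
        qed
        also have "\<dots> = 0" using Aw'[OF l] l0 by simp
        finally show "(\<Sum>l'\<in>{0..<k}. real (ch!l' choose rh!l) * (w$l' - (if l' = l0 then 1 else 0))) = 0" .
      qed
      have "(\<Sum>l\<in>{0..<k}. real (ch!l choose r!i) * w$l) = (\<Sum>l\<in>{0..<k}. if l = l0 then real (ch!l choose r!i) else 0)"
        by (rule sum.cong[OF refl], insert wd, auto)
      also have "\<dots> = real (c!j choose r!i)" using l0 by simp
      finally show ?thesis by simp
    next
      case nc: False
      define xs where "xs = rh @ [r!i]"
      define ys where "ys = ch @ [c!j]"
      define M where "M = pascal_sub xs ys"
      have lxs: "length xs = Suc k" and lys: "length ys = Suc k" using k kc unfolding xs_def ys_def by auto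
      have M: "M \<in> carrier_mat (Suc k) (Suc k)" unfolding M_def using pascal_sub_carrier[of xs ys] lxs lys by simp
      have detM: "det M = 0"
      proof (rule ccontr)
        assume "det M \<noteq> 0"
        then have nz: "det (pascal_sub (sort xs) (sort ys)) \<noteq> 0"
          using det_pascal_sort[of xs ys] lxs lys unfolding M_def by simp
        have dx: "distinct xs" using srh nr unfolding xs_def by (auto simp: strict_sorted_iff)
        have dy: "distinct ys" using sch nc unfolding ys_def by (auto simp: strict_sorted_iff)
        have sx: "sorted_wrt (<) (sort xs)" using dx by (simp add: strict_sorted_iff)
        have sy: "sorted_wrt (<) (sort ys)" using dy by (simp add: strict_sorted_iff)
        have "0 < det (pascal_sub (sort xs) (sort ys))"
          using pascal_det_main[OF sx sy] nz lxs lys by auto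
        then have le: "\<forall>l<length (sort xs). sort xs ! l \<le> sort ys ! l"
          using pascal_det_main[OF sx sy] lxs lys by auto
        have "subseq (sort xs) r"
          by (rule sorted_subset_imp_subseq, insert setrh i sx r, auto simp: xs_def strict_sorted_imp_sorted)
        moreover have "subseq (sort ys) c"
          by (rule sorted_subset_imp_subseq, insert setch j sy c, auto simp: ys_def strict_sorted_imp_sorted)
        ultimately have "ordered_subpair r c (sort xs) (sort ys)"
          unfolding ordered_subpair_def using le lxs lys by auto
        then have "length (sort xs) \<le> length rh" using mx unfolding maximal_subpair_def by blast
        then show False using lxs k by simp
      qed
      obtain v where v: "v \<in> carrier_vec (Suc k)" "v \<noteq> 0\<^sub>v (Suc k)" "M *\<^sub>v v = 0\<^sub>v (Suc k)"
        using det_0_iff_vec_prod_zero_field[OF M] detM by auto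
      have Mv: "(\<Sum>l'\<in>{0..<Suc k}. M $$ (l,l') * v$l') = 0" if l: "l < Suc k" for l
      proof -
        have "(M *\<^sub>v v) $ l = 0" using v(3) l by simp
        then show ?thesis using l M v(1) by (auto simp: scalar_prod_def)
      qed
      have Mlow: "M $$ (l,l') = real (ch!l' choose rh!l)" if "l < k" "l' < k" for l l'
        using that lxs lys k kc unfolding M_def xs_def ys_def by (auto simp: nth_append)
      have Mlast: "M $$ (l,k) = real (c!j choose rh!l)" if "l < k" for l
        using that lxs lys k kc unfolding M_def xs_def ys_def by (auto simp: nth_append)
      have Mbot: "M $$ (k,l') = real (ch!l' choose r!i)" if "l' < k" for l'
        using that lxs lys k kc unfolding M_def xs_def ys_def by (auto simp: nth_append)
      have Mkk: "M $$ (k,k) = real (c!j choose r!i)"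
        using lxs lys k kc unfolding M_def xs_def ys_def by (auto simp: nth_append)
      define t where "t = v $ k"
      have vz: "v$l + t * w$l = 0" if l: "l < k" for l
      proof (rule uniq[where z = "\<lambda>l. v$l + t * w$l", OF _ l])
        fix l assume l: "l < k"
        have "(\<Sum>l'\<in>{0..<k}. real (ch!l' choose rh!l) * (v$l' + t * w$l'))
            = (\<Sum>l'\<in>{0..<k}. M $$ (l,l') * v$l' + t * (real (ch!l' choose rh!l) * w$l'))"
        proof (rule sum.cong[OF refl])
          fix l' assume "l' \<in> {0..<k}"
          then have "M $$ (l,l') = real (ch!l' choose rh!l)" using Mlow[OF l] by simp
          then show "real (ch!l' choose rh!l) * (v$l' + t * w$l') = M $$ (l,l') * v$l' + t * (real (ch!l' choose rh!l) * w$l')"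
            by (simp add: algebra_simps)
        qed
        also have "\<dots> = (\<Sum>l'\<in>{0..<k}. M $$ (l,l') * v$l') + t * (\<Sum>l'\<in>{0..<k}. real (ch!l' choose rh!l) * w$l')"
          by (simp add: sum.distrib sum_distrib_left)
        also have "\<dots> = (\<Sum>l'\<in>{0..<k}. M $$ (l,l') * v$l') + M $$ (l,k) * v$k"
          using Aw'[OF l] Mlast[OF l] unfolding t_def by simp
        also have "\<dots> = (\<Sum>l'\<in>{0..<Suc k}. M $$ (l,l') * v$l')" by simp
        also have "\<dots> = 0" using Mv[of l] l by simp
        finally show "(\<Sum>l'\<in>{0..<k}. real (ch!l' choose rh!l) * (v$l' + t * w$l')) = 0" .
      qed
      have t0: "t \<noteq> 0"
      proof
        assume "t = 0"
        then have "v = 0\<^sub>v (Suc k)"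
          using vz v(1) unfolding t_def by (intro eq_vecI, auto simp: less_Suc_eq)
        then show False using v(2) by simp
      qed
      have "0 = (\<Sum>l'\<in>{0..<Suc k}. M $$ (k,l') * v$l')" using Mv[of k] by simp
      also have "\<dots> = (\<Sum>l'\<in>{0..<k}. M $$ (k,l') * v$l') + M $$ (k,k) * t"
        unfolding t_def by simp
      also have "(\<Sum>l'\<in>{0..<k}. M $$ (k,l') * v$l') = (\<Sum>l'\<in>{0..<k}. real (ch!l' choose r!i) * v$l')"
        by (rule sum.cong[OF refl], insert Mbot, auto)
      also have "M $$ (k,k) = real (c!j choose r!i)" by (rule Mkk)
      also have "(\<Sum>l'\<in>{0..<k}. real (ch!l' choose r!i) * v$l') = - t * (\<Sum>l'\<in>{0..<k}. real (ch!l' choose r!i) * w$l')"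
      proof -
        have "(\<Sum>l'\<in>{0..<k}. real (ch!l' choose r!i) * v$l') = (\<Sum>l'\<in>{0..<k}. real (ch!l' choose r!i) * (- t * w$l'))"
        proof (rule sum.cong[OF refl])
          fix x assume "x \<in> {0..<k}"
          then have "v$x = - t * w$x" using vz[of x] by (simp add: eq_neg_iff_add_eq_0)
          then show "real (ch!x choose r!i) * v$x = real (ch!x choose r!i) * (- t * w$x)" by simp
        qed
        then show ?thesis by (simp add: sum_distrib_left ac_simps)
      qed
      finally have "t * (real (c!j choose r!i) - (\<Sum>l'\<in>{0..<k}. real (ch!l' choose r!i) * w$l')) = 0"
        by (simp add: algebra_simps) (metis (no_types, lifting))
      then show ?thesis using t0 by simp
    qed
  qed
qed simp_all



context vec_space
begin

lemma col_space_mono: "set (cols A) \<subseteq> set (cols B) \<Longrightarrow> col_space A \<subseteq> col_space B"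
  unfolding col_space_def by (rule span_is_monotone)

lemma row_space_mono: "set (rows A) \<subseteq> set (rows B) \<Longrightarrow> row_space A \<subseteq> row_space B"
  unfolding row_space_def by (rule span_is_monotone)

lemma rank_le_nr:
  assumes A: "A \<in> carrier_mat n nc"
  shows "rank A \<le> n"
proof -
  obtain S where S: "maximal S (\<lambda>T. T \<subseteq> set (cols A) \<and> lin_indpt T)"
    using maximal_exists[of "(\<lambda>T. T \<subseteq> set (cols A) \<and> lin_indpt T)" "card (set (cols A))" "{}"]
    by (meson List.finite_set card_mono empty_iff empty_subsetI finite_lin_indpt2 rev_finite_subset)
  have "S \<subseteq> set (cols A)" "lin_indpt S" using S unfolding maximal_def by auto
  moreover have "set (cols A) \<subseteq> carrier_vec n" using A cols_dim by blast
  ultimately have "card S \<le> dim" using li_le_dim(2)[OF fin_dim] by blast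
  then show ?thesis using rank_card_indpt[OF A S] dim_is_n by simp
qed

lemma col_space_mult:
  assumes A: "A \<in> carrier_mat n k" and X: "X \<in> carrier_mat k nc"
  shows "col_space (A * X) \<subseteq> col_space A"
proof
  fix y assume "y \<in> col_space (A * X)"
  then obtain x where y: "y \<in> carrier_vec n" and x: "x \<in> carrier_vec nc" and yx: "(A * X) *\<^sub>v x = y"
    unfolding col_space_eq[OF mult_carrier_mat[OF A X]] using A X by auto
  have "A *\<^sub>v (X *\<^sub>v x) = y" using yx assoc_mult_mat_vec[OF A X x] by simp
  moreover have "X *\<^sub>v x \<in> carrier_vec k" using X x by auto
  ultimately show "y \<in> col_space A" unfolding col_space_eq[OF A] using y A by auto
qed

lemma row_space_mult:
  assumes Y: "Y \<in> carrier_mat nr k" and B: "B \<in> carrier_mat k n"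
  shows "row_space (Y * B) \<subseteq> row_space B"
proof
  fix w assume "w \<in> row_space (Y * B)"
  then obtain y where w: "w \<in> carrier_vec n" and y: "y \<in> carrier_vec nr" and wy: "(Y * B)\<^sup>T *\<^sub>v y = w"
    unfolding row_space_eq[OF mult_carrier_mat[OF Y B]] using Y B by auto
  have "(Y * B)\<^sup>T = B\<^sup>T * Y\<^sup>T" using transpose_mult[OF Y B] .
  then have "B\<^sup>T *\<^sub>v (Y\<^sup>T *\<^sub>v y) = w" using wy assoc_mult_mat_vec[of "B\<^sup>T" n k "Y\<^sup>T" nr y] Y B y by simp
  moreover have "Y\<^sup>T *\<^sub>v y \<in> carrier_vec k" using Y y by auto
  ultimately show "w \<in> row_space B" unfolding row_space_eq[OF B] using w B by auto
qed

lemma rank_col_space: "col_space A = col_space B \<Longrightarrow> rank A = rank B"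
  unfolding rank_def col_space_def by simp

end

lemma det_nz_inverse:
  fixes A :: "real mat"
  assumes A: "A \<in> carrier_mat n n" and d: "det A \<noteq> 0"
  obtains B where "B \<in> carrier_mat n n" "A * B = 1\<^sub>m n" "B * A = 1\<^sub>m n"
proof -
  from det_non_zero_imp_unit[OF A d, of "()"]
  show ?thesis using that unfolding Units_def ring_mat_def by auto
qed

lemma cols_pascal_subset:
  assumes "set ch \<subseteq> set c"
  shows "set (cols (pascal_sub r ch)) \<subseteq> set (cols (pascal_sub r c))"
proof
  fix v assume "v \<in> set (cols (pascal_sub r ch))"
  then obtain l where l: "l < length ch" "v = col (pascal_sub r ch) l" unfolding cols_def by auto
  then obtain j where j: "j < length c" "c!j = ch!l" using assms by (metis in_set_conv_nth nth_mem subsetD)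
  have "v = col (pascal_sub r c) j" by (rule eq_vecI, insert l j, auto)
  then show "v \<in> set (cols (pascal_sub r c))" using j unfolding cols_def by auto
qed

lemma rows_pascal_subset:
  assumes "set rh \<subseteq> set r"
  shows "set (rows (pascal_sub rh c)) \<subseteq> set (rows (pascal_sub r c))"
proof
  fix v assume "v \<in> set (rows (pascal_sub rh c))"
  then obtain l where l: "l < length rh" "v = row (pascal_sub rh c) l" unfolding rows_def by auto
  then obtain i where i: "i < length r" "r!i = rh!l" using assms by (metis in_set_conv_nth nth_mem subsetD)
  have "v = row (pascal_sub r c) i" by (rule eq_vecI, insert l i, auto)
  then show "v \<in> set (rows (pascal_sub r c))" using i unfolding rows_def by auto
qed


theorem theorem2:
  fixes r c rh ch :: "nat list" and m n p :: nat
  assumes "selection r" and "selection c"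
    and "length r = m + 1" and "length c = n + 1"
    and "ordered_subpair r c rh ch" and "length rh = p + 1"
  shows "(pascal_sub rh ch \<in> carrier_mat (p+1) (p+1) \<and> invertible_mat (pascal_sub rh ch)
          \<and> (\<exists>I J. I \<subseteq> {..<m+1} \<and> J \<subseteq> {..<n+1} \<and> pascal_sub rh ch = submatrix (pascal_sub r c) I J))
    \<and> (pascal_sub rh c \<in> carrier_mat (p+1) (n+1) \<and> vec_space.rank (p+1) (pascal_sub rh c) = p + 1)
    \<and> (pascal_sub r ch \<in> carrier_mat (m+1) (p+1) \<and> vec_space.rank (m+1) (pascal_sub r ch) = p + 1)
    \<and> (maximal_subpair r c rh ch \<longrightarrow>
          vec_space.rank (m+1) (pascal_sub r c) = p + 1
        \<and> vec_space.col_space (m+1) (pascal_sub r ch) = vec_space.col_space (m+1) (pascal_sub r c)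
        \<and> vec_space.row_space (n+1) (pascal_sub rh c) = vec_space.row_space (n+1) (pascal_sub r c))"
proof -
  have r: "sorted_wrt (<) r" and c: "sorted_wrt (<) c" using assms(1,2) unfolding selection_def by auto
  have os: "subseq rh r" "subseq ch c" "length rh = length ch" "\<forall>i<length rh. rh!i \<le> ch!i"
    using assms(5) unfolding ordered_subpair_def by auto
  have lch: "length ch = p + 1" using os assms(6) by simp
  have srh: "sorted_wrt (<) rh" using subseq_sorted_wrt[OF os(1) r] .
  have sch: "sorted_wrt (<) ch" using subseq_sorted_wrt[OF os(2) c] .
  have setrh: "set rh \<subseteq> set r" using subseq_set[OF os(1)] .
  have setch: "set ch \<subseteq> set c" using subseq_set[OF os(2)] .
  have Ac: "pascal_sub rh ch \<in> carrier_mat (p+1) (p+1)" using pascal_sub_carrier[of rh ch] assms(6) lch by simp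
  have dpos: "0 < det (pascal_sub rh ch)" using pascal_det_main[OF srh sch os(3)] os(4) by auto
  then have dnz: "det (pascal_sub rh ch) \<noteq> 0" by simp
  have P1: "pascal_sub rh ch \<in> carrier_mat (p+1) (p+1) \<and> invertible_mat (pascal_sub rh ch)
          \<and> (\<exists>I J. I \<subseteq> {..<m+1} \<and> J \<subseteq> {..<n+1} \<and> pascal_sub rh ch = submatrix (pascal_sub r c) I J)"
    using Ac det_nz_invertible[OF Ac dnz] pascal_submatrix[OF r c os(1) os(2)] assms(3,4) by metis
  have Bc: "pascal_sub rh c \<in> carrier_mat (p+1) (n+1)" using pascal_sub_carrier[of rh c] assms(6,4) by simp
  have Cc: "pascal_sub r ch \<in> carrier_mat (m+1) (p+1)" using pascal_sub_carrier[of r ch] assms(3) lch by simp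
  have Tc: "pascal_sub r c \<in> carrier_mat (m+1) (n+1)" using pascal_sub_carrier[of r c] assms(3,4) by simp
  have rkB: "vec_space.rank (p+1) (pascal_sub rh c) = p + 1"
  proof (rule antisym)
    show "vec_space.rank (p+1) (pascal_sub rh c) \<le> p + 1" by (rule vec_space.rank_le_nr[OF Bc])
    obtain I J where IJ: "submatrix (pascal_sub rh c) I J = pascal_sub rh ch"
      using pascal_submatrix[OF srh c list_emb_refl os(2)] by blast
    have "card {j. j < n+1 \<and> j \<in> J} \<le> vec_space.rank (p+1) (pascal_sub rh c)"
      using vec_space.rank_gt_minor[OF Bc, of I J] IJ dnz by simp
    moreover have "card {j. j < n+1 \<and> j \<in> J} = p + 1"
      using arg_cong[OF IJ, of dim_col] dim_submatrix(2)[of "pascal_sub rh c" I J] assms(4) lch by simp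
    ultimately show "p + 1 \<le> vec_space.rank (p+1) (pascal_sub rh c)" by simp
  qed
  have rkC: "vec_space.rank (m+1) (pascal_sub r ch) = p + 1"
  proof (rule antisym)
    show "vec_space.rank (m+1) (pascal_sub r ch) \<le> p + 1" by (rule vec_space.rank_le_nc[OF Cc])
    obtain I J where IJ: "submatrix (pascal_sub r ch) I J = pascal_sub rh ch"
      using pascal_submatrix[OF r sch os(1) list_emb_refl] by blast
    have "card {j. j < p+1 \<and> j \<in> J} \<le> vec_space.rank (m+1) (pascal_sub r ch)"
      using vec_space.rank_gt_minor[OF Cc, of I J] IJ dnz by simp
    moreover have "card {j. j < p+1 \<and> j \<in> J} = p + 1"
      using arg_cong[OF IJ, of dim_col] dim_submatrix(2)[of "pascal_sub r ch" I J] lch by simp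
    ultimately show "p + 1 \<le> vec_space.rank (m+1) (pascal_sub r ch)" by simp
  qed
  have P4: "maximal_subpair r c rh ch \<longrightarrow>
          vec_space.rank (m+1) (pascal_sub r c) = p + 1
        \<and> vec_space.col_space (m+1) (pascal_sub r ch) = vec_space.col_space (m+1) (pascal_sub r c)
        \<and> vec_space.row_space (n+1) (pascal_sub rh c) = vec_space.row_space (n+1) (pascal_sub r c)"
  proof
    assume mx: "maximal_subpair r c rh ch"
    obtain Ainv where Ai: "Ainv \<in> carrier_mat (p+1) (p+1)" "pascal_sub rh ch * Ainv = 1\<^sub>m (p+1)"
      "Ainv * pascal_sub rh ch = 1\<^sub>m (p+1)"
      using det_nz_inverse[OF Ac dnz] by blast
    have fac: "pascal_sub r c = pascal_sub r ch * (Ainv * pascal_sub rh c)"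
      by (rule pascal_factor[OF r c assms(5) mx Ai(1) _ Ai(2,3)], simp add: assms(6))
    have X: "Ainv * pascal_sub rh c \<in> carrier_mat (p+1) (n+1)" using Ai(1) Bc by auto
    have Y: "pascal_sub r ch * Ainv \<in> carrier_mat (m+1) (p+1)" using Ai(1) Cc by auto
    have fac2: "pascal_sub r c = (pascal_sub r ch * Ainv) * pascal_sub rh c"
      using fac assoc_mult_mat[OF Cc Ai(1) Bc] by simp
    have cs: "vec_space.col_space (m+1) (pascal_sub r ch) = vec_space.col_space (m+1) (pascal_sub r c)"
    proof
      show "vec_space.col_space (m+1) (pascal_sub r ch) \<subseteq> vec_space.col_space (m+1) (pascal_sub r c)"
        by (rule vec_space.col_space_mono, rule cols_pascal_subset[OF setch])
      show "vec_space.col_space (m+1) (pascal_sub r c) \<subseteq> vec_space.col_space (m+1) (pascal_sub r ch)"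
        using vec_space.col_space_mult[OF Cc X] fac by simp
    qed
    have rs: "vec_space.row_space (n+1) (pascal_sub rh c) = vec_space.row_space (n+1) (pascal_sub r c)"
    proof
      show "vec_space.row_space (n+1) (pascal_sub rh c) \<subseteq> vec_space.row_space (n+1) (pascal_sub r c)"
        by (rule vec_space.row_space_mono, rule rows_pascal_subset[OF setrh])
      show "vec_space.row_space (n+1) (pascal_sub r c) \<subseteq> vec_space.row_space (n+1) (pascal_sub rh c)"
        using vec_space.row_space_mult[OF Y Bc] fac2 by simp
    qed
    have "vec_space.rank (m+1) (pascal_sub r c) = vec_space.rank (m+1) (pascal_sub r ch)"
      by (rule vec_space.rank_col_space, rule cs[symmetric])
    then show "vec_space.rank (m+1) (pascal_sub r c) = p + 1
        \<and> vec_space.col_space (m+1) (pascal_sub r ch) = vec_space.col_space (m+1) (pascal_sub r c)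
        \<and> vec_space.row_space (n+1) (pascal_sub rh c) = vec_space.row_space (n+1) (pascal_sub r c)"
      using rkC cs rs by simp
  qed
  show ?thesis using P1 Bc rkB Cc rkC P4 by blast
qed


end
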